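(* Let $k>0$ and assume $g$ satisfies (Hg) and (Hg2). Then there exists $\delta_a\in(0,1)$ such that for all $a\in(0,\delta_a)$: (i) $g''(a;a)>0$; (ii) $$0<\frac{g'(a;a)}{k+1}<\max_{A\in[a+\frac{2a}{k},1]}\frac{g(A;a)}{A}.$$
   Context: Derivatives $g',g''$ are with respect to the first argument. A function $g:\mathbb R\times[0,1]\to\mathbb R$, $(u,a)\mapsto g(u;a)$, satisfies (Hg) if it is $C^1$ and for every $a\in(0,1)$: $g(0;a)=g(a;a)=g(1;a)=0$, $g'(0;a)<0$, $g'(1;a)<0$, $g'(a;a)>0$, $g(v;a)>0$ for $v\in(-\infty,0)\cup(a,1)$ and $g(v;a)<0$ for $v\in(0,a)\cup(1,\infty)$. (Hg2): for each $a\in[0,1]$, $g(\cdot;a)\in C^2(\mathbb R)$; $g'(a;a)=0$ for $a\in\{0,1\}$; $g''(0;0)>0$, $g''(1;1)<0$; and there exist $a_0,a_1\in(0,1)$ such that for each $a\in(0,a_0)$ and each $a\in(a_1,1)$ there is a unique $v$ with $g''(v;a)=0$. *)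

theory Defs
  imports "HOL-Analysis.Analysis"
begin

text \<open>g :: real \<Rightarrow> real \<Rightarrow> real, written g u a for g(u;a).
  Derivatives are with respect to the first argument.\<close>

definition d1 :: "(real \<Rightarrow> real \<Rightarrow> real) \<Rightarrow> real \<Rightarrow> real \<Rightarrow> real" where
  "d1 g u a = deriv (\<lambda>v. g v a) u"

definition d2 :: "(real \<Rightarrow> real \<Rightarrow> real) \<Rightarrow> real \<Rightarrow> real \<Rightarrow> real" where
  "d2 g u a = deriv (\<lambda>v. d1 g v a) u"

definition C1_on_strip :: "(real \<Rightarrow> real \<Rightarrow> real) \<Rightarrow> bool" where
  "C1_on_strip g \<longleftrightarrow> (\<exists>gu ga :: real \<times> real \<Rightarrow> real.
     continuous_on (UNIV \<times> {0..1}) gu \<and> continuous_on (UNIV \<times> {0..1}) ga \<and>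
     (\<forall>p \<in> UNIV \<times> {0..1}.
        ((\<lambda>q. g (fst q) (snd q)) has_derivative (\<lambda>h. gu p * fst h + ga p * snd h))
          (at p within UNIV \<times> {0..1})))"

definition Hg :: "(real \<Rightarrow> real \<Rightarrow> real) \<Rightarrow> bool" where
  "Hg g \<longleftrightarrow> C1_on_strip g \<and>
    (\<forall>a \<in> {0<..<1}.
       g 0 a = 0 \<and> g a a = 0 \<and> g 1 a = 0 \<and>
       d1 g 0 a < 0 \<and> d1 g 1 a < 0 \<and> d1 g a a > 0 \<and>
       (\<forall>v. (v < 0 \<or> (a < v \<and> v < 1)) \<longrightarrow> g v a > 0) \<and>
       (\<forall>v. ((0 < v \<and> v < a) \<or> 1 < v) \<longrightarrow> g v a < 0))"

definition C2_real :: "(real \<Rightarrow> real) \<Rightarrow> bool" where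
  "C2_real f \<longleftrightarrow> (\<forall>x. f differentiable (at x)) \<and>
     (\<forall>x. deriv f differentiable (at x)) \<and> continuous_on UNIV (deriv (deriv f))"

definition Hg2 :: "(real \<Rightarrow> real \<Rightarrow> real) \<Rightarrow> bool" where
  "Hg2 g \<longleftrightarrow>
    (\<forall>a \<in> {0..1}. C2_real (\<lambda>v. g v a)) \<and>
    d1 g 0 0 = 0 \<and> d1 g 1 1 = 0 \<and>
    d2 g 0 0 > 0 \<and> d2 g 1 1 < 0 \<and>
    (\<exists>a0 \<in> {0<..<1}. \<exists>a1 \<in> {0<..<1}.
       (\<forall>a \<in> {0<..<a0}. \<exists>!v. d2 g v a = 0) \<and>
       (\<forall>a \<in> {a1<..<1}. \<exists>!v. d2 g v a = 0))"

end

theory Submission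
  imports Defs
begin

lemma inflect:
  fixes f f' :: "real \<Rightarrow> real"
  assumes D: "\<And>x. (f has_real_derivative f' x) (at x)" and C: "continuous_on UNIV f'"
    and "0 < a" "a < u1" "u1 < u2" "a < 1"
    and "f 0 < 0" "f a > 0" "f 1 < 0" "f u1 < f u2" and U: "\<exists>!v. f' v = 0"
  shows "f' a > 0"
proof (rule ccontr)
  assume na: "\<not> f' a > 0"
  have ic: "isCont f' x" for x using C by (simp add: continuous_on_eq_continuous_at)
  obtain x1 where x1: "0 < x1" "x1 < a" "f a - f 0 = (a - 0) * f' x1"
    using MVT2[of 0 a f f'] D \<open>0 < a\<close> by blast
  have p1: "f' x1 > 0" using x1 assms by (smt (verit) mult_nonneg_nonpos)
  obtain x2 where x2: "u1 < x2" "x2 < u2" "f u2 - f u1 = (u2 - u1) * f' x2"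
    using MVT2[of u1 u2 f f'] D \<open>u1 < u2\<close> by blast
  have p2: "f' x2 > 0" using x2 assms by (smt (verit) mult_nonneg_nonpos)
  obtain x3 where x3: "a < x3" "x3 < 1" "f 1 - f a = (1 - a) * f' x3"
    using MVT2[of a 1 f f'] D \<open>a < 1\<close> by blast
  have p3: "f' x3 < 0" using x3 assms by (smt (verit) mult_nonneg_nonneg)
  obtain z1 where z1: "x1 \<le> z1" "z1 \<le> a" "f' z1 = 0"
    using IVT2[of f' a 0 x1] na p1 x1 ic by auto
  obtain z2 where z2: "a \<le> z2" "z2 \<le> x2" "f' z2 = 0"
    using IVT[of f' a 0 x2] na p2 x2 assms ic by auto
  have "z1 = z2" using U z1 z2 by blast
  hence fa: "f' a = 0" using z1 z2 by auto
  obtain z3 where z3: "a < z3" "f' z3 = 0"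
  proof (cases "x2 \<le> x3")
    case True
    have "\<exists>z. x2 \<le> z \<and> z \<le> x3 \<and> f' z = 0"
      by (rule IVT2[of f' x3 0 x2]) (use p2 p3 ic True in auto)
    then obtain z where "x2 \<le> z" "f' z = 0" by blast
    moreover have "a < x2" using x2 \<open>a < u1\<close> by linarith
    ultimately show ?thesis by (intro that[of z]) auto
  next
    case False
    have "\<exists>z. x3 \<le> z \<and> z \<le> x2 \<and> f' z = 0"
      by (rule IVT[of f' x3 0 x2]) (use p2 p3 ic False in auto)
    then obtain z where "x3 \<le> z" "f' z = 0" by blast
    then show ?thesis using x3 by (intro that[of z]) auto
  qed
  show False using U fa z3 by auto
qed

lemma C1_partial:
  fixes g :: "real \<Rightarrow> real \<Rightarrow> real"
  assumes H: "\<forall>p\<in>UNIV\<times>{0..1}. ((\<lambda>q. g (fst q) (snd q)) has_derivative (\<lambda>h. gu p * fst h + ga p * snd h)) (at p within UNIV\<times>{0..1})"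
    and a: "a \<in> {0..1}"
  shows "((\<lambda>v. g v a) has_real_derivative gu (u,a)) (at u)"
proof -
  have sub: "UNIV \<times> {a} \<subseteq> (UNIV \<times> {0..1} :: (real \<times> real) set)" using a by auto
  have mem: "(u,a) \<in> UNIV \<times> {0..1}" using a by simp
  have H0: "((\<lambda>q. g (fst q) (snd q)) has_derivative (\<lambda>h. gu (u,a) * fst h + ga (u,a) * snd h)) (at (u,a) within UNIV \<times> {0..1})"
    using H mem by blast
  have img: "(\<lambda>v. (v,a)) ` UNIV = (UNIV \<times> {a} :: (real \<times> real) set)" by auto
  have H1: "((\<lambda>q. g (fst q) (snd q)) has_derivative (\<lambda>h. gu (u,a) * fst h + ga (u,a) * snd h)) (at ((\<lambda>v. (v,a)) u) within ((\<lambda>v. (v,a)) ` UNIV))"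
    unfolding img using has_derivative_subset[OF H0 sub] by simp
  have L: "((\<lambda>v. (v,a)) has_derivative (\<lambda>h. (h,0))) (at u)"
    by (auto intro!: derivative_eq_intros)
  have "((\<lambda>q. g (fst q) (snd q)) \<circ> (\<lambda>v. (v,a)) has_derivative (\<lambda>h. gu (u,a) * fst h + ga (u,a) * snd h) \<circ> (\<lambda>h. (h,0))) (at u)"
    using diff_chain_within[OF L H1] by simp
  then have "((\<lambda>v. g v a) has_derivative (\<lambda>h. gu (u,a) * h)) (at u)"
    by (simp add: o_def)
  then show ?thesis unfolding has_field_derivative_def by assumption
qed


lemma C2_facts:
  assumes "C2_real (\<lambda>v. g v a)"
  shows "\<And>x. ((\<lambda>v. g v a) has_real_derivative d1 g x a) (at x)"
    "\<And>x. ((\<lambda>v. d1 g v a) has_real_derivative d2 g x a) (at x)"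
    "continuous_on UNIV (\<lambda>v. d2 g v a)"
proof -
  have e1: "(\<lambda>v. d1 g v a) = deriv (\<lambda>v. g v a)" by (simp add: d1_def fun_eq_iff)
  have e2: "(\<lambda>v. d2 g v a) = deriv (deriv (\<lambda>v. g v a))" by (simp add: d2_def e1 fun_eq_iff)
  show "((\<lambda>v. g v a) has_real_derivative d1 g x a) (at x)" for x
    using assms unfolding C2_real_def d1_def by (simp add: DERIV_deriv_iff_real_differentiable)
  show "((\<lambda>v. d1 g v a) has_real_derivative d2 g x a) (at x)" for x
    using assms unfolding C2_real_def e1 d2_def by (simp add: DERIV_deriv_iff_real_differentiable)
  show "continuous_on UNIV (\<lambda>v. d2 g v a)"
    using assms unfolding C2_real_def e2 by simp
qed

lemma cont_pt:
  fixes F :: "'a::metric_space \<Rightarrow> real"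
  assumes "continuous_on S F" "p \<in> S" "e > 0"
  obtains d where "d > 0" "\<forall>x\<in>S. dist x p < d \<longrightarrow> \<bar>F x - F p\<bar> < e"
  using assms unfolding continuous_on_iff dist_real_def by metis

lemma cont_pt2:
  fixes G :: "real \<Rightarrow> real \<Rightarrow> real"
  assumes "continuous_on S (\<lambda>q. G (fst q) (snd q))" "(x0,y0) \<in> S" "e > 0"
  shows "\<exists>d>0. \<forall>x\<in>S. dist x (x0,y0) < d \<longrightarrow> \<bar>G (fst x) (snd x) - G x0 y0\<bar> < e"
proof -
  obtain d where "d > 0" "\<forall>x\<in>S. dist x (x0,y0) < d \<longrightarrow> \<bar>G (fst x) (snd x) - G (fst (x0,y0)) (snd (x0,y0))\<bar> < e"
    by (rule cont_pt[OF assms])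
  then show ?thesis by auto
qed

lemma cont_pt3:
  fixes F :: "'a::metric_space \<Rightarrow> real"
  assumes "continuous_on S F" "p \<in> S" "e > 0"
  shows "\<exists>d>0. \<forall>x\<in>S. dist x p < d \<longrightarrow> \<bar>F x - F p\<bar> < e"
  using cont_pt[OF assms] by blast


theorem lemma5p5:
  fixes g :: "real \<Rightarrow> real \<Rightarrow> real" and k :: real
  assumes "k > 0" and "Hg g" and "Hg2 g"
  shows "\<exists>\<delta>a \<in> {0<..<1}. \<forall>a \<in> {0<..<\<delta>a}.
           d2 g a a > 0 \<and>
           0 < d1 g a a / (k + 1) \<and>
           d1 g a a / (k + 1) < (SUP A \<in> {a + 2 * a / k .. 1}. g A a / A)"
proof -
  define S :: "(real \<times> real) set" where "S = UNIV \<times> {0..1}"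
  obtain gu ga :: "real \<times> real \<Rightarrow> real" where cgu: "continuous_on S gu"
    and H: "\<forall>p\<in>UNIV\<times>{0..1}. ((\<lambda>q. g (fst q) (snd q)) has_derivative (\<lambda>h. gu p * fst h + ga p * snd h)) (at p within UNIV\<times>{0..1})"
    using assms(2) unfolding Hg_def C1_on_strip_def S_def by blast
  have Hga: "g 0 a = 0 \<and> g a a = 0 \<and> g 1 a = 0 \<and> d1 g 0 a < 0 \<and> d1 g 1 a < 0 \<and> d1 g a a > 0"
    if "a \<in> {0<..<1}" for a using assms(2) that unfolding Hg_def by blast
  have C2: "C2_real (\<lambda>v. g v a)" if "a \<in> {0..1}" for a using assms(3) that unfolding Hg2_def by blast
  have d100: "d1 g 0 0 = 0" and d200: "d2 g 0 0 > 0" using assms(3) unfolding Hg2_def by auto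
  obtain a0 where a0: "a0 \<in> {0<..<1}" "\<forall>a \<in> {0<..<a0}. \<exists>!v. d2 g v a = 0"
    using assms(3) unfolding Hg2_def by blast
  have D1: "d1 g u a = gu (u,a)" if "a \<in> {0..1}" for u a
    unfolding d1_def using C1_partial[OF H that] by (rule DERIV_imp_deriv)
  have cG: "continuous_on S (\<lambda>q. g (fst q) (snd q))"
    unfolding continuous_on_eq_continuous_within
    using H has_derivative_continuous unfolding S_def by blast
  have C20: "C2_real (\<lambda>v. g v 0)" by (rule C2) simp
  note F0 = C2_facts[of g 0, OF C20]
  obtain d where d: "d > 0" "\<forall>x\<in>UNIV. dist x 0 < d \<longrightarrow> \<bar>d2 g x 0 - d2 g 0 0\<bar> < d2 g 0 0"
    using cont_pt[OF F0(3), of 0 "d2 g 0 0"] d200 by auto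
  define \<delta> where "\<delta> = min (d/2) (1/2)"
  have \<delta>: "0 < \<delta>" "\<delta> \<le> 1/2" "\<delta> < d" using d by (auto simp: \<delta>_def)
  have pos2: "d2 g x 0 > 0" if "0 \<le> x" "x \<le> \<delta>" for x
  proof -
    have "\<bar>x - 0\<bar> < d" using that \<delta> by auto
    then have "\<bar>d2 g x 0 - d2 g 0 0\<bar> < d2 g 0 0" using d(2) by (simp add: dist_real_def)
    then show ?thesis by linarith
  qed
  define u1 where "u1 = \<delta>/2"
  define u2 where "u2 = \<delta>"
  have u: "0 < u1" "u1 < u2" "u2 \<le> 1/2" using \<delta> by (auto simp: u1_def u2_def)
  have F1: "d1 g u1 0 < d1 g u2 0"
  proof -
    obtain z where z: "u1 < z" "z < u2" "d1 g u2 0 - d1 g u1 0 = (u2 - u1) * d2 g z 0"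
      using MVT2[of u1 u2 "\<lambda>v. d1 g v 0" "\<lambda>v. d2 g v 0"] F0(2) u by blast
    have "d2 g z 0 > 0" using pos2 z u by (auto simp: u2_def)
    then show ?thesis using z u by (smt (verit) mult_pos_pos)
  qed
  have g00: "g 0 0 = 0"
  proof (rule ccontr)
    assume ne: "g 0 0 \<noteq> 0"
    obtain e where e: "e > 0" "\<forall>x\<in>S. dist x (0,0) < e \<longrightarrow> \<bar>g (fst x) (snd x) - g 0 0\<bar> < \<bar>g 0 0\<bar>"
      using cont_pt2[OF cG, of 0 0 "\<bar>g 0 0\<bar>"] ne unfolding S_def by auto
    define t where "t = min (e/2) (1/2)"
    have t: "t \<in> {0<..<1}" "t < e" using e by (auto simp: t_def)
    have "(0,t) \<in> S" using t by (auto simp: S_def)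
    moreover have "dist (0,t) (0::real,0::real) < e" using t by (simp add: dist_Pair_Pair dist_real_def)
    ultimately have "\<bar>g 0 t - g 0 0\<bar> < \<bar>g 0 0\<bar>" using e by force
    then show False using Hga[OF t(1)] by simp
  qed
  have F2: "g u1 0 > 0"
  proof -
    obtain z where z: "0 < z" "z < u1" "g u1 0 - g 0 0 = (u1 - 0) * d1 g z 0"
      using MVT2[of 0 u1 "\<lambda>v. g v 0" "\<lambda>v. d1 g v 0"] F0(1) u by blast
    obtain w where w: "0 < w" "w < z" "d1 g z 0 - d1 g 0 0 = (z - 0) * d2 g w 0"
      using MVT2[of 0 z "\<lambda>v. d1 g v 0" "\<lambda>v. d2 g v 0"] F0(2) z by blast
    have "d2 g w 0 > 0" using pos2 w z u by (auto simp: u1_def)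
    then have "d1 g z 0 > 0" using w d100 by (smt (verit) mult_pos_pos)
    then show ?thesis using z g00 u by (smt (verit) mult_pos_pos)
  qed
  define c where "c = g u1 0 / (2 * u1)"
  have c: "c > 0" using F2 u by (simp add: c_def)
  have mS1: "(u1,0) \<in> S" and mS2: "(u2,0) \<in> S" and mS0: "(0,0) \<in> S" by (simp_all add: S_def)
  obtain \<eta>1 where \<eta>1: "\<eta>1 > 0" "\<forall>x\<in>S. dist x (u1,0) < \<eta>1 \<longrightarrow> \<bar>g (fst x) (snd x) - g u1 0\<bar> < g u1 0 / 2"
    using cont_pt2[OF cG mS1, of "g u1 0 / 2"] F2 by auto
  define e1 where "e1 = (d1 g u2 0 - d1 g u1 0) / 2"
  have e1: "e1 > 0" using F1 by (simp add: e1_def)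
  obtain \<eta>2 where \<eta>2: "\<eta>2 > 0" "\<forall>x\<in>S. dist x (u1,0) < \<eta>2 \<longrightarrow> \<bar>gu x - gu (u1,0)\<bar> < e1"
    using cont_pt3[OF cgu mS1 e1] by blast
  obtain \<eta>3 where \<eta>3: "\<eta>3 > 0" "\<forall>x\<in>S. dist x (u2,0) < \<eta>3 \<longrightarrow> \<bar>gu x - gu (u2,0)\<bar> < e1"
    using cont_pt3[OF cgu mS2 e1] by blast
  obtain \<eta>4 where \<eta>4: "\<eta>4 > 0" "\<forall>x\<in>S. dist x (0,0) < \<eta>4 \<longrightarrow> \<bar>gu x - gu (0,0)\<bar> < (k+1) * c"
    using cont_pt3[OF cgu mS0, of "(k+1)*c"] c assms(1) by auto
  have gu00: "gu (0,0) = 0" using D1[of 0 0] d100 by simp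
  have gu1: "gu (u1,0) = d1 g u1 0" "gu (u2,0) = d1 g u2 0" using D1 by auto
  define h4 where "h4 = \<eta>4/2"
  define h6 where "h6 = u1 * k / (k+2)"
  define h7 :: real where "h7 = 1/2"
  have hpos: "h4 > 0" "h6 > 0" "h7 > 0" using \<eta>4(1) u assms(1) by (simp_all add: h4_def h6_def h7_def)
  define \<delta>a where "\<delta>a = min \<eta>1 (min \<eta>2 (min \<eta>3 (min h4 (min a0 (min h6 h7)))))"
  have \<delta>a_le0: "\<delta>a \<le> \<eta>1" "\<delta>a \<le> \<eta>2" "\<delta>a \<le> \<eta>3" "\<delta>a \<le> h4" "\<delta>a \<le> a0" "\<delta>a \<le> h6" "\<delta>a \<le> h7"
    unfolding \<delta>a_def by (simp_all add: min_le_iff_disj)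
  then have \<delta>a_le: "\<delta>a \<le> \<eta>1" "\<delta>a \<le> \<eta>2" "\<delta>a \<le> \<eta>3" "\<delta>a \<le> \<eta>4/2" "\<delta>a \<le> a0" "\<delta>a \<le> u1 * k / (k+2)" "\<delta>a \<le> 1/2"
    unfolding h4_def h6_def h7_def by auto
  have \<delta>a_pos: "\<delta>a > 0" unfolding \<delta>a_def using \<eta>1(1) \<eta>2(1) \<eta>3(1) hpos a0(1) by simp
  show ?thesis
  proof (rule bexI[of _ \<delta>a], intro ballI conjI)
    show "\<delta>a \<in> {0<..<1}" using \<delta>a_pos \<delta>a_le by auto
  next
    fix a assume a: "a \<in> {0<..<\<delta>a}"
    have a01: "a \<in> {0<..<1}" "a \<in> {0..1}" using a \<delta>a_le by auto
    have "a < u1 * k / (k+2)" using a \<delta>a_le(6) by simp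
    then have "a * (k+2) < u1 * k" using assms(1) by (simp add: pos_less_divide_eq)
    then have ak: "a * (k+2) / k < u1" using assms(1) by (simp add: pos_divide_less_eq)
    have ak2: "a * (k+2) / k = a + 2 * a / k" using assms(1) by (simp add: field_simps)
    have "2 * a / k > 0" using a assms(1) by simp
    then have au1: "a < u1" using ak ak2 by linarith
    note Ha = Hga[OF a01(1)]
    have dPa: "dist (x, a) (x, 0) = a" for x using a by (simp add: dist_Pair_Pair dist_real_def)
    have inS: "(x, a) \<in> S" for x using a01 by (simp add: S_def)
    have l1: "d1 g u1 a < d1 g u2 a"
    proof -
      have "dist (u1,a) (u1,0) < \<eta>2" using dPa[of u1] a \<delta>a_le(2) by simp
      then have "\<bar>gu (u1,a) - gu (u1,0)\<bar> < e1" using \<eta>2(2) inS[of u1] by blast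
      then have i1: "gu (u1,a) < gu (u1,0) + e1" by linarith
      have "dist (u2,a) (u2,0) < \<eta>3" using dPa[of u2] a \<delta>a_le(3) by simp
      then have "\<bar>gu (u2,a) - gu (u2,0)\<bar> < e1" using \<eta>3(2) inS[of u2] by blast
      then have i2: "gu (u2,0) - e1 < gu (u2,a)" by linarith
      have "gu (u1,0) + e1 = gu (u2,0) - e1" unfolding gu1 e1_def by (simp add: field_simps)
      then have "gu (u1,a) < gu (u2,a)" using i1 i2 by linarith
      then show ?thesis using D1[OF a01(2)] by simp
    qed
    have un: "\<exists>!v. d2 g v a = 0" using a0(2) a \<delta>a_le(5) by simp
    note CF = C2_facts[of g a, OF C2[OF a01(2)]]
    have a1: "a < 1" using a01 by simp
    have "0 < a" using a01 by simp
    have "u1 < u2" using u by simp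
    show "d2 g a a > 0"
      by (rule inflect[of "\<lambda>v. d1 g v a" "\<lambda>v. d2 g v a" a u1 u2, OF CF(2) CF(3)
         \<open>0 < a\<close> au1 \<open>u1 < u2\<close> a1 _ _ _ l1 un]) (use Ha in simp_all)
    show "0 < d1 g a a / (k + 1)" using Ha assms(1) by simp
    have gl: "g u1 a / u1 > c"
    proof -
      have "dist (u1,a) (u1,0) < \<eta>1" using dPa[of u1] a \<delta>a_le(1) by simp
      then have "\<bar>g (fst (u1,a)) (snd (u1,a)) - g u1 0\<bar> < g u1 0 / 2" using \<eta>1(2) inS[of u1] by blast
      then have "\<bar>g u1 a - g u1 0\<bar> < g u1 0 / 2" by simp
      moreover have "g u1 0 = 2 * (g u1 0 / 2)" by simp
      ultimately have "g u1 a > g u1 0 / 2" unfolding abs_less_iff by linarith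
      then have "(g u1 0 / 2) / u1 < g u1 a / u1" using u by (intro divide_strict_right_mono) auto
      moreover have "c = (g u1 0 / 2) / u1" unfolding c_def by simp
      ultimately show ?thesis by simp
    qed
    have dl: "d1 g a a < (k+1) * c"
    proof -
      have "dist (a,a) (0::real,0::real) < \<eta>4"
      proof -
        have "dist (a,a) (0::real,0::real) = sqrt (a^2 + a^2)" by (simp add: dist_Pair_Pair dist_real_def)
        also have "\<dots> \<le> sqrt (a^2) + sqrt (a^2)" by (rule sqrt_add_le_add_sqrt) auto
        also have "\<dots> = 2 * a" using a by simp
        finally show ?thesis using a \<delta>a_le by auto
      qed
      moreover have "(a,a) \<in> S" using a01 by (simp add: S_def)
      ultimately have "\<bar>gu (a,a) - gu (0,0)\<bar> < (k+1) * c" using \<eta>4 by blast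
      then show ?thesis using D1[OF a01(2)] gu00 by auto
    qed
    have mem: "u1 \<in> {a + 2 * a / k .. 1}"
    proof -
      show ?thesis using ak ak2 u by auto
    qed
    have bdd: "bdd_above ((\<lambda>A. g A a / A) ` {a + 2 * a / k .. 1})"
    proof -
      have pos: "A > 0" if "A \<in> {a + 2 * a / k .. 1}" for A
      proof -
        have "2 * a / k > 0" using a assms(1) by simp
        then have "a + 2 * a / k > 0" using a by simp
        then show ?thesis using that by simp
      qed
      have cg: "continuous_on {a + 2 * a / k .. 1} (\<lambda>A. g A a)"
        using C2_facts(1)[of g a, OF C2[OF a01(2)]]
        by (intro continuous_at_imp_continuous_on ballI DERIV_isCont) blast
      have "continuous_on {a + 2 * a / k .. 1} (\<lambda>A. g A a / A)"
        apply (intro continuous_intros cg)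
        using pos by (metis order_less_irrefl)
      then have "compact ((\<lambda>A. g A a / A) ` {a + 2 * a / k .. 1})"
        by (intro compact_continuous_image) auto
      then show ?thesis by (intro bounded_imp_bdd_above compact_imp_bounded)
    qed
    have "d1 g a a / (k+1) < c" using dl assms(1) by (simp add: pos_divide_less_eq mult.commute)
    also have "\<dots> < g u1 a / u1" by (rule gl)
    also have "\<dots> \<le> (SUP A \<in> {a + 2 * a / k .. 1}. g A a / A)"
      by (rule cSUP_upper[OF mem bdd])
    finally show "d1 g a a / (k + 1) < (SUP A \<in> {a + 2 * a / k .. 1}. g A a / A)" .
  qed
qed

end
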